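(* For $n\ge 1$ and $P$ a Dyck $n$-path, the number of long interior inclines in $P$ plus the number of occurrences of $DXD$ in the elevated path $E(P)=UPD$ equals $n-1$.
   Context: A Dyck $n$-path is a path from $(0,0)$ to $(2n,0)$ with $n$ upsteps $U=(1,1)$ and $n$ downsteps $D=(1,-1)$ never going below the $x$-axis, written as a word in $U,D$. An ascent (resp. descent) is a maximal run of consecutive $U$s (resp. $D$s); an incline is an ascent or descent; it is long if it has at least two steps. The first ascent and last descent of a nonempty Dyck path are not interior; all other inclines are interior. A $DXD$ is an occurrence of $DUD$ or $DDD$ as three consecutive steps. $E(P)=UPD$ is obtained by prepending $U$ and appending $D$. *)

theory Defs
  imports Main
begin

datatype step = U | D

definition height :: "step list \<Rightarrow> int" where
  "height w = int (length (filter (\<lambda>s. s = U) w)) - int (length (filter (\<lambda>s. s = D) w))"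

definition dyck_path :: "nat \<Rightarrow> step list \<Rightarrow> bool" where
  "dyck_path n w \<longleftrightarrow>
     length (filter (\<lambda>s. s = U) w) = n \<and> length (filter (\<lambda>s. s = D) w) = n \<and>
     (\<forall>k \<le> length w. height (take k w) \<ge> 0)"

text \<open>Decomposition of a word into its maximal runs of equal letters (its inclines),
  each recorded as (letter, length), in left-to-right order.\<close>
fun runs :: "step list \<Rightarrow> (step \<times> nat) list" where
  "runs [] = []"
| "runs (x # xs) = (case runs xs of
       [] \<Rightarrow> [(x, 1)]
     | (y, k) # r \<Rightarrow> (if x = y then (y, Suc k) # r else (x, 1) # (y, k) # r))"

definition interior_inclines :: "step list \<Rightarrow> (step \<times> nat) list" where
  "interior_inclines w = butlast (tl (runs w))"

definition num_long_interior_inclines :: "step list \<Rightarrow> nat" where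
  "num_long_interior_inclines w = length (filter (\<lambda>(x, k). k \<ge> 2) (interior_inclines w))"

definition num_DXD :: "step list \<Rightarrow> nat" where
  "num_DXD w = card {i. i + 2 < length w \<and> w ! i = D \<and> w ! (i + 2) = D}"

definition elevate :: "step list \<Rightarrow> step list" where
  "elevate P = U # P @ [D]"

end

theory Submission
  imports Defs
begin

fun dxd :: "step list \<Rightarrow> nat" where
  "dxd (a # b # c # r) = (if a = D \<and> c = D then 1 else 0) + dxd (b # c # r)"
| "dxd _ = 0"

lemma num_DXD_cons:
  "num_DXD (a # b # c # r) = (if a = D \<and> c = D then 1 else 0) + num_DXD (b # c # r)"
proof -
  let ?S = "\<lambda>w. {i. i + 2 < length w \<and> w ! i = D \<and> w ! (i + 2) = D}"
  have eq: "?S (a # b # c # r) = (if a = D \<and> c = D then {0} else {}) \<union> Suc ` ?S (b # c # r)"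
  proof (rule set_eqI)
    fix i show "i \<in> ?S (a # b # c # r) \<longleftrightarrow> i \<in> (if a = D \<and> c = D then {0} else {}) \<union> Suc ` ?S (b # c # r)"
      by (cases i) auto
  qed
  have fin: "finite (?S w)" for w by (rule finite_subset[of _ "{..<length w}"]) auto
  have "card (?S (a # b # c # r)) = card (if a = D \<and> c = D then {0::nat} else {}) + card (Suc ` ?S (b # c # r))"
    unfolding eq by (rule card_Un_disjoint) (auto intro: fin)
  also have "card (Suc ` ?S (b # c # r)) = card (?S (b # c # r))" by (simp add: card_image)
  finally show ?thesis unfolding num_DXD_def by simp
qed

lemma num_DXD_dxd: "num_DXD w = dxd w"
proof (induction w rule: dxd.induct)
  case (1 a b c r) then show ?case by (simp add: num_DXD_cons)
next
  case ("2_1") then show ?case by (simp add: num_DXD_def)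
next
  case ("2_2" v) then show ?case by (simp add: num_DXD_def)
next
  case ("2_3" v va) then show ?case by (auto simp add: num_DXD_def less_Suc_eq)
qed

lemma runs_nonempty: "w \<noteq> [] \<Longrightarrow> runs w \<noteq> []"
  by (cases w) (auto split: list.split)

lemma runs_hd: "w \<noteq> [] \<Longrightarrow> fst (hd (runs w)) = hd w"
  by (cases w) (auto split: list.split)

lemma runs_last: "w \<noteq> [] \<Longrightarrow> fst (last (runs w)) = last w"
proof (induction w)
  case Nil then show ?case by simp
next
  case (Cons a w)
  show ?case
  proof (cases "w = []")
    case True then show ?thesis by simp
  next
    case False
    then obtain y k r where rw: "runs w = (y, k) # r" using runs_nonempty
      by (metis list.exhaust prod.exhaust)
    show ?thesis using Cons False rw by (cases r) auto
  qed
qed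

lemma runs_pos: "p \<in> set (runs x) \<Longrightarrow> snd p \<ge> 1"
proof (induction x arbitrary: p)
  case Nil then show ?case by simp
next
  case (Cons a x) then show ?case by (cases "runs x") (fastforce split: if_splits)+
qed

lemma runs_Cons: "runs v = (y, k) # r \<Longrightarrow> runs (x # v) = (if x = y then (y, Suc k) # r else (x, 1) # (y, k) # r)"
  by simp

lemma runs_first_len:
  assumes "runs v = (y, k) # r"
  shows "(k \<ge> 2) \<longleftrightarrow> (length v \<ge> 2 \<and> v ! 1 = v ! 0)"
proof (cases v)
  case Nil then show ?thesis using assms by simp
next
  case (Cons a v')
  show ?thesis
  proof (cases "v' = []")
    case True then show ?thesis using assms Cons by simp
  next
    case False
    then obtain y' k' r' where rw: "runs v' = (y', k') # r'" using runs_nonempty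
      by (metis list.exhaust prod.exhaust)
    have "fst (hd (runs v')) = hd v'" using runs_hd False by blast
    then have "y' = hd v'" using rw by simp
    moreover have "hd v' = v' ! 0" using False by (cases v') auto
    moreover have "k' \<ge> 1" using runs_pos[of "(y', k')" v'] rw by simp
    ultimately show ?thesis using assms Cons rw False
      by (cases v') (auto split: if_splits)
  qed
qed

definition longs :: "(step \<times> nat) list \<Rightarrow> nat" where
  "longs rs = length (filter (\<lambda>(x, k). k \<ge> 2) rs)"

definition cD :: "step list \<Rightarrow> nat" where
  "cD w = length (filter (\<lambda>s. s = D) w)"

lemma main_ind:
  "w \<noteq> [] \<Longrightarrow> last w = D \<Longrightarrow>
   longs (tl (runs w)) + dxd w + 1 + (if take 2 w = [D, D] then 1 else 0) = cD w"
proof (induction w)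
  case Nil then show ?case by simp
next
  case (Cons x v)
  show ?case
  proof (cases "v = []")
    case True then show ?thesis using Cons by (simp add: longs_def cD_def)
  next
    case False
    then obtain y k r where rw: "runs v = (y, k) # r" using runs_nonempty
      by (metis list.exhaust prod.exhaust)
    have IH: "longs (tl (runs v)) + dxd v + 1 + (if take 2 v = [D, D] then 1 else 0) = cD v"
      using Cons False by simp
    have y: "y = hd v" using runs_hd[OF False] rw by simp
    have fl: "(k \<ge> 2) \<longleftrightarrow> (length v \<ge> 2 \<and> v ! 1 = v ! 0)" using runs_first_len[OF rw] .
    have lv: "last v = D" using Cons False by simp
    obtain b v2 where vb: "v = b # v2" using False by (cases v) auto
    have yb: "y = b" using y vb by simp
    show ?thesis
    proof (cases v2)
      case Nil
      then show ?thesis using vb lv IH rw yb fl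
        by (auto simp add: longs_def cD_def)
    next
      case (Cons c v3)
      have dx: "dxd (x # v) = (if x = D \<and> c = D then 1 else 0) + dxd v" using vb Cons by simp
      have f: "v ! 0 = b" "v ! 1 = c" "take 2 (x # v) = [x, b]" "take 2 v = [b, c]" "length v \<ge> 2"
        "cD (x # v) = cD v + (if x = D then 1 else 0)"
        using vb Cons by (auto simp add: cD_def)
      show ?thesis
      proof (cases "x = y")
        case True
        have "runs (x # v) = (y, Suc k) # r" using rw True by simp
        then have "longs (tl (runs (x # v))) = longs (tl (runs v))" using rw by simp
        then show ?thesis using IH dx f yb True fl
          by (cases b; cases c) auto
      next
        case False
        have "runs (x # v) = (x, 1) # (y, k) # r" using rw False by simp
        then have "longs (tl (runs (x # v))) = longs (tl (runs v)) + (if k \<ge> 2 then 1 else 0)"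
          using rw by (simp add: longs_def)
        then show ?thesis using IH dx f yb False fl
          by (cases b; cases c; cases x) auto
      qed
    qed
  qed
qed

lemma runs_snoc:
  "xs \<noteq> [] \<Longrightarrow> last xs = x \<Longrightarrow>
   runs (xs @ [x]) = butlast (runs xs) @ [(x, Suc (snd (last (runs xs))))]"
proof (induction xs)
  case Nil then show ?case by simp
next
  case (Cons a ys)
  show ?case
  proof (cases "ys = []")
    case True then show ?thesis using Cons by simp
  next
    case False
    then obtain y k r where rw: "runs ys = (y, k) # r" using runs_nonempty
      by (metis list.exhaust prod.exhaust)
    have IH: "runs (ys @ [x]) = butlast (runs ys) @ [(x, Suc (snd (last (runs ys))))]"
      using Cons False by simp
    show ?thesis
    proof (cases "r = []")
      case True
      have "y = x" using runs_last[OF False] rw True Cons False by simp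
      then show ?thesis using IH rw True by simp
    next
      case rne: False
      then show ?thesis using IH rw by (simp add: runs_Cons)
    qed
  qed
qed

lemma height_snoc: "height (xs @ [s]) = height xs + (if s = U then 1 else -1)"
  by (cases s) (auto simp add: height_def)

theorem mainTheorem5:
  fixes n :: nat and P :: "step list"
  assumes "n \<ge> 1" and "dyck_path n P"
  shows "num_long_interior_inclines P + num_DXD (elevate P) = n - 1"
proof -
  have cU: "length (filter (\<lambda>s. s = U) P) = n" and cDn: "cD P = n"
    and hk: "\<And>k. k \<le> length P \<Longrightarrow> height (take k P) \<ge> 0"
    using assms(2) by (auto simp add: dyck_path_def cD_def)
  have Pne: "P \<noteq> []" using cU assms(1) by auto
  have hdP: "hd P = U"
  proof (rule ccontr)
    assume "hd P \<noteq> U"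
    then have "hd P = D" by (cases "hd P") auto
    then have "take 1 P = [D]" using Pne by (cases P) auto
    then show False using hk[of 1] Pne by (cases P) (auto simp add: height_def)
  qed
  have lastP: "last P = D"
  proof (rule ccontr)
    assume "last P \<noteq> D"
    then have lU: "last P = U" by (cases "last P") auto
    have "height P = 0" using cU cDn by (simp add: height_def cD_def)
    moreover have "P = butlast P @ [U]" using lU Pne append_butlast_last_id[OF Pne] by simp
    moreover have "height (butlast P) \<ge> 0" using hk[of "length P - 1"] by (simp add: butlast_conv_take)
    ultimately show False using height_snoc[of "butlast P" U] by simp
  qed
  obtain k r where rw: "runs P = (U, k) # r" using runs_nonempty[OF Pne] runs_hd[OF Pne] hdP
    by (metis list.exhaust prod.exhaust fst_conv list.sel(1))
  have rne: "r \<noteq> []" using runs_last[OF Pne] lastP rw by auto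
  then obtain m where lr: "last r = (D, m)" using runs_last[OF Pne] lastP rw
    by (metis prod.exhaust fst_conv last_ConsR)
  have r1: "runs (P @ [D]) = (U, k) # butlast r @ [(D, Suc m)]"
    using runs_snoc[OF Pne lastP] rw rne lr by simp
  have r2: "runs (elevate P) = (U, Suc k) # butlast r @ [(D, Suc m)]"
    unfolding elevate_def using r1 by (simp add: runs_Cons)
  have "longs (tl (runs (elevate P))) + dxd (elevate P) + 1 +
        (if take 2 (elevate P) = [D, D] then 1 else 0) = cD (elevate P)"
    by (rule main_ind) (auto simp add: elevate_def)
  moreover have "take 2 (elevate P) \<noteq> [D, D]" by (simp add: elevate_def)
  moreover have "cD (elevate P) = n + 1" using cDn by (simp add: elevate_def cD_def)
  moreover have "longs (tl (runs (elevate P))) = longs (butlast r) + 1"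
  proof -
    have "last r \<in> set (runs P)" using rw rne by simp
    then have "m \<ge> 1" using runs_pos lr by fastforce
    then show ?thesis using r2 by (simp add: longs_def)
  qed
  moreover have "num_long_interior_inclines P = longs (butlast r)"
    unfolding num_long_interior_inclines_def interior_inclines_def longs_def using rw by simp
  ultimately show ?thesis by (simp add: num_DXD_dxd)
qed

end
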